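(* Let $n\ge0$. If a variety $\mathcal V$ has $n+2$ Gumm terms, then $\mathcal V$ is $(2n+2)$-modular, i.e. it satisfies $\alpha(\beta\circ\alpha\gamma\circ\beta)\subseteq\alpha\beta\circ_{2n+2}\alpha\gamma$ for all congruences $\alpha,\beta,\gamma$.
   Context: $\circ$ is relational composition, juxtaposition is intersection. For relations $X,Y$ and $m\ge1$, $X\circ_m Y$ denotes $X\circ Y\circ X\circ\cdots$ with $m$ factors. A variety has $n+2$ Gumm terms if it has ternary terms $p,j_1,\dots,j_{n+1}$ satisfying: $x=j_i(x,y,x)$ for all $i$; $x=p(x,z,z)$; $p(x,x,z)=j_1(x,x,z)$; $j_i(x,z,z)=j_{i+1}(x,z,z)$ for odd $i\le n$; $j_i(x,x,z)=j_{i+1}(x,x,z)$ for even $i\le n$; $j_{n+1}(x,y,z)=z$. *)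

theory Defs
  imports Main
begin

datatype 'f uterm = Var nat | Fn 'f "'f uterm list"

record ('f, 'a) alg =
  univ :: "'a set"
  ops  :: "'f \<Rightarrow> 'a list \<Rightarrow> 'a"

definition algebra :: "('f \<Rightarrow> nat) \<Rightarrow> ('f, 'a) alg \<Rightarrow> bool" where
  "algebra ar A \<longleftrightarrow> univ A \<noteq> {} \<and>
     (\<forall>f xs. length xs = ar f \<and> set xs \<subseteq> univ A \<longrightarrow> ops A f xs \<in> univ A)"

fun wf_term :: "('f \<Rightarrow> nat) \<Rightarrow> 'f uterm \<Rightarrow> bool" where
  "wf_term ar (Var i) = True"
| "wf_term ar (Fn f ts) = (length ts = ar f \<and> (\<forall>t\<in>set ts. wf_term ar t))"

fun vars :: "'f uterm \<Rightarrow> nat set" where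
  "vars (Var i) = {i}"
| "vars (Fn f ts) = (\<Union>t\<in>set ts. vars t)"

fun eval :: "('f, 'a) alg \<Rightarrow> 'f uterm \<Rightarrow> (nat \<Rightarrow> 'a) \<Rightarrow> 'a" where
  "eval A (Var i) \<sigma> = \<sigma> i"
| "eval A (Fn f ts) \<sigma> = ops A f (map (\<lambda>t. eval A t \<sigma>) ts)"

definition ternary_term :: "('f \<Rightarrow> nat) \<Rightarrow> 'f uterm \<Rightarrow> bool" where
  "ternary_term ar t \<longleftrightarrow> wf_term ar t \<and> vars t \<subseteq> {0,1,2}"

definition tev :: "('f, 'a) alg \<Rightarrow> 'f uterm \<Rightarrow> 'a \<Rightarrow> 'a \<Rightarrow> 'a \<Rightarrow> 'a" where
  "tev A t x y z = eval A t (\<lambda>i. if i = 0 then x else if i = 1 then y else z)"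

definition satisfies :: "('f, 'a) alg \<Rightarrow> 'f uterm \<times> 'f uterm \<Rightarrow> bool" where
  "satisfies A e \<longleftrightarrow> (\<forall>\<sigma>. range \<sigma> \<subseteq> univ A \<longrightarrow> eval A (fst e) \<sigma> = eval A (snd e) \<sigma>)"

definition variety :: "('f \<Rightarrow> nat) \<Rightarrow> ('f uterm \<times> 'f uterm) set \<Rightarrow> ('f, 'a) alg set" where
  "variety ar \<Sigma> = {A. algebra ar A \<and> (\<forall>e\<in>\<Sigma>. satisfies A e)}"

definition congruence :: "('f \<Rightarrow> nat) \<Rightarrow> ('f, 'a) alg \<Rightarrow> 'a rel \<Rightarrow> bool" where
  "congruence ar A \<alpha> \<longleftrightarrow> equiv (univ A) \<alpha> \<and>
     (\<forall>f xs ys. length xs = ar f \<and> length ys = ar f \<and> set xs \<subseteq> univ A \<and> set ys \<subseteq> univ A \<and>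
        (\<forall>k < ar f. (xs ! k, ys ! k) \<in> \<alpha>) \<longrightarrow> (ops A f xs, ops A f ys) \<in> \<alpha>)"

text \<open>X \<circ>_m Y = X \<circ> Y \<circ> X \<circ> ... with m factors (only used for m \<ge> 1).\<close>
fun rcomp_alt :: "'a rel \<Rightarrow> 'a rel \<Rightarrow> nat \<Rightarrow> 'a rel" where
  "rcomp_alt X Y 0 = Id"
| "rcomp_alt X Y (Suc 0) = X"
| "rcomp_alt X Y (Suc (Suc m)) = X O rcomp_alt Y X (Suc m)"

definition has_gumm_terms ::
  "('f \<Rightarrow> nat) \<Rightarrow> ('f, 'a) alg set \<Rightarrow> nat \<Rightarrow> bool" where
  "has_gumm_terms ar V n \<longleftrightarrow> (\<exists>p j.
     ternary_term ar p \<and> (\<forall>i\<in>{1..n+1}. ternary_term ar (j i)) \<and>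
     (\<forall>A\<in>V. \<forall>x\<in>univ A. \<forall>y\<in>univ A. \<forall>z\<in>univ A.
        (\<forall>i\<in>{1..n+1}. tev A (j i) x y x = x) \<and>
        tev A p x z z = x \<and>
        tev A p x x z = tev A (j 1) x x z \<and>
        (\<forall>i. 1 \<le> i \<and> i \<le> n \<and> odd i \<longrightarrow> tev A (j i) x z z = tev A (j (i+1)) x z z) \<and>
        (\<forall>i. 1 \<le> i \<and> i \<le> n \<and> even i \<longrightarrow> tev A (j i) x x z = tev A (j (i+1)) x x z) \<and>
        tev A (j (n+1)) x y z = z))"

end

theory Submission
  imports Defs
begin

lemma cong_props:
  assumes "congruence ar A \<theta>"
  shows "\<theta> \<subseteq> univ A \<times> univ A" "\<And>a. a \<in> univ A \<Longrightarrow> (a,a) \<in> \<theta>"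
    "\<And>a b. (a,b) \<in> \<theta> \<Longrightarrow> (b,a) \<in> \<theta>"
    "\<And>a b c. (a,b) \<in> \<theta> \<Longrightarrow> (b,c) \<in> \<theta> \<Longrightarrow> (a,c) \<in> \<theta>"
  using assms unfolding congruence_def equiv_def refl_on_def sym_def trans_def by blast+

lemma eval_cong:
  assumes c: "congruence ar A \<theta>"
  shows "wf_term ar t \<Longrightarrow> (\<forall>i. (\<sigma> i, \<tau> i) \<in> \<theta>) \<Longrightarrow> (eval A t \<sigma>, eval A t \<tau>) \<in> \<theta>"
proof (induction t)
  case (Var i)
  then show ?case by simp
next
  case (Fn f ts)
  have IH: "\<forall>t\<in>set ts. (eval A t \<sigma>, eval A t \<tau>) \<in> \<theta>" using Fn by auto
  have sub: "\<theta> \<subseteq> univ A \<times> univ A" using cong_props[OF c] by blast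
  have l: "length ts = ar f" using Fn.prems by simp
  show ?case unfolding eval.simps
    using c[unfolded congruence_def] IH sub l
    apply (elim conjE)
    apply (drule spec[of _ f], drule spec[of _ "map (\<lambda>t. eval A t \<sigma>) ts"],
           drule spec[of _ "map (\<lambda>t. eval A t \<tau>) ts"])
    apply (erule mp)
    by (auto simp: l)
qed

lemma tev_cong:
  assumes c: "congruence ar A \<theta>" and t: "ternary_term ar t"
    and "(x,x') \<in> \<theta>" "(y,y') \<in> \<theta>" "(z,z') \<in> \<theta>"
  shows "(tev A t x y z, tev A t x' y' z') \<in> \<theta>"
  unfolding tev_def
  by (rule eval_cong[OF c]) (use t assms in \<open>auto simp: ternary_term_def\<close>)

lemma chain:
  fixes p :: "'f uterm" and j :: "nat \<Rightarrow> 'f uterm"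
  assumes ca: "congruence ar A \<alpha>" and cb: "congruence ar A \<beta>" and cg: "congruence ar A \<gamma>"
    and tp: "ternary_term ar p" and tj: "\<forall>i\<in>{1..n+1}. ternary_term ar (j i)"
    and ids: "\<forall>x\<in>univ A. \<forall>y\<in>univ A. \<forall>z\<in>univ A.
        (\<forall>i\<in>{1..n+1}. tev A (j i) x y x = x) \<and>
        tev A p x z z = x \<and>
        tev A p x x z = tev A (j 1) x x z \<and>
        (\<forall>i. 1 \<le> i \<and> i \<le> n \<and> odd i \<longrightarrow> tev A (j i) x z z = tev A (j (i+1)) x z z) \<and>
        (\<forall>i. 1 \<le> i \<and> i \<le> n \<and> even i \<longrightarrow> tev A (j i) x x z = tev A (j (i+1)) x x z) \<and>
        tev A (j (n+1)) x y z = z"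
    and xu: "(x,u) \<in> \<beta>" and uv: "(u,v) \<in> \<alpha> \<inter> \<gamma>" and vz: "(v,z) \<in> \<beta>" and xz: "(x,z) \<in> \<alpha>"
  shows "(x,z) \<in> ((\<alpha> \<inter> \<gamma>) O (\<alpha> \<inter> \<beta>))^^(n+1)"
proof -
  let ?U = "univ A"
  let ?C = "\<alpha> \<inter> \<gamma>" and ?B = "\<alpha> \<inter> \<beta>"
  let ?R = "?C O ?B"
  note a = cong_props[OF ca] and b = cong_props[OF cb] and g = cong_props[OF cg]
  have xU: "x \<in> ?U" and uU: "u \<in> ?U" and vU: "v \<in> ?U" and zU: "z \<in> ?U"
    using xu vz b(1) by auto
  have idj: "\<And>x y i. x \<in> ?U \<Longrightarrow> y \<in> ?U \<Longrightarrow> i \<in> {1..n+1} \<Longrightarrow> tev A (j i) x y x = x"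
    using ids by blast
  have idp1: "\<And>x z. x \<in> ?U \<Longrightarrow> z \<in> ?U \<Longrightarrow> tev A p x z z = x"
    using ids by blast
  have idp2: "\<And>x z. x \<in> ?U \<Longrightarrow> z \<in> ?U \<Longrightarrow> tev A p x x z = tev A (j 1) x x z"
    using ids by blast
  have ido: "\<And>x z i. x \<in> ?U \<Longrightarrow> z \<in> ?U \<Longrightarrow> 1 \<le> i \<Longrightarrow> i \<le> n \<Longrightarrow> odd i \<Longrightarrow>
      tev A (j i) x z z = tev A (j (i+1)) x z z"
    using ids by blast
  have ide: "\<And>x z i. x \<in> ?U \<Longrightarrow> z \<in> ?U \<Longrightarrow> 1 \<le> i \<Longrightarrow> i \<le> n \<Longrightarrow> even i \<Longrightarrow>
      tev A (j i) x x z = tev A (j (i+1)) x x z"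
    using ids by blast
  have idl: "\<And>x y z. x \<in> ?U \<Longrightarrow> y \<in> ?U \<Longrightarrow> z \<in> ?U \<Longrightarrow> tev A (j (n+1)) x y z = z"
    using ids by blast
  have ux: "(u,x) \<in> \<beta>" by (rule b(3)[OF xu])
  have zv: "(z,v) \<in> \<beta>" by (rule b(3)[OF vz])
  have uva: "(u,v) \<in> \<alpha>" and uvg: "(u,v) \<in> \<gamma>" using uv by auto
  have vua: "(v,u) \<in> \<alpha>" by (rule a(3)[OF uva])
  have vug: "(v,u) \<in> \<gamma>" by (rule g(3)[OF uvg])
  have zx: "(z,x) \<in> \<alpha>" by (rule a(3)[OF xz])
  define s where "s k = (if odd k then z else x)" for k :: nat
  define t where "t k = tev A (j (k+1)) x (s k) z" for k
  have claim: "k \<le> n \<Longrightarrow> (x, t k) \<in> ?R^^(k+1)" for k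
  proof (induction k)
    case 0
    have e1: "tev A p x v v = x" using idp1 xU vU by blast
    have e2: "tev A p x z z = x" using idp1 xU zU by blast
    have e3: "tev A p x x z = t 0" using idp2[OF xU zU] by (simp add: t_def s_def)
    have "(tev A p x v v, tev A p x u v) \<in> \<alpha>"
      by (rule tev_cong[OF ca tp a(2)[OF xU] vua a(2)[OF vU]])
    moreover have "(tev A p x v v, tev A p x u v) \<in> \<gamma>"
      by (rule tev_cong[OF cg tp g(2)[OF xU] vug g(2)[OF vU]])
    ultimately have r1: "(x, tev A p x u v) \<in> ?C" using e1 by simp
    have "(tev A p x u v, tev A p x x z) \<in> \<beta>"
      by (rule tev_cong[OF cb tp b(2)[OF xU] ux vz])
    moreover have "(tev A p x x z, tev A p x z z) \<in> \<alpha>"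
      by (rule tev_cong[OF ca tp a(2)[OF xU] xz a(2)[OF zU]])
    moreover have "(tev A p x u v, x) \<in> \<alpha>" using r1 a(3) by blast
    ultimately have "(tev A p x u v, t 0) \<in> ?B" using e2 e3 a(4)[of "tev A p x u v" x "tev A p x x z"]
      a(3)[of "tev A p x x z" x] by auto
    with r1 show ?case by auto
  next
    case (Suc k)
    define i where "i = k + 1"
    have i1: "1 \<le> i" "i \<le> n" using Suc.prems by (auto simp: i_def)
    have ti: "ternary_term ar (j i)" using tj i1 by auto
    define w where "w = (if odd k then v else u)"
    define w' where "w' = (if odd k then u else v)"
    have wU: "w \<in> ?U" "w' \<in> ?U" using uU vU by (auto simp: w_def w'_def)
    have sU: "s k \<in> ?U" "s (Suc k) \<in> ?U" using xU zU by (auto simp: s_def)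
    have alx: "(tev A (j i) x c z, x) \<in> \<alpha>" if "c \<in> ?U" for c
    proof -
      have "(tev A (j i) x c z, tev A (j i) x c x) \<in> \<alpha>"
        by (rule tev_cong[OF ca ti a(2)[OF xU] a(2)[OF that] zx])
      moreover have "tev A (j i) x c x = x" using idj[OF xU that] i1 by auto
      ultimately show ?thesis by simp
    qed
    have al: "(tev A (j i) x c z, tev A (j i) x c' z) \<in> \<alpha>" if "c \<in> ?U" "c' \<in> ?U" for c c'
      using a(4)[OF alx[OF that(1)] a(3)[OF alx[OF that(2)]]] .
    have tk: "t k = tev A (j i) x (s k) z" by (simp add: t_def i_def)
    have bs1: "(s k, w) \<in> \<beta>" using xu zv by (simp add: s_def w_def)
    have bs2: "(w', s (Suc k)) \<in> \<beta>" using ux vz by (simp add: s_def w'_def)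
    have cw: "(w, w') \<in> \<alpha> \<inter> \<gamma>" using uva uvg vua vug by (simp add: w_def w'_def)
    have r1: "(t k, tev A (j i) x w z) \<in> ?B"
    proof
      show "(t k, tev A (j i) x w z) \<in> \<beta>" unfolding tk
        by (rule tev_cong[OF cb ti b(2)[OF xU] bs1 b(2)[OF zU]])
      show "(t k, tev A (j i) x w z) \<in> \<alpha>" unfolding tk by (rule al[OF sU(1) wU(1)])
    qed
    have r2: "(tev A (j i) x w z, tev A (j i) x w' z) \<in> ?C"
    proof
      show "(tev A (j i) x w z, tev A (j i) x w' z) \<in> \<gamma>"
        by (rule tev_cong[OF cg ti g(2)[OF xU] _ g(2)[OF zU]]) (use cw in blast)
      show "(tev A (j i) x w z, tev A (j i) x w' z) \<in> \<alpha>" by (rule al[OF wU])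
    qed
    have r3: "(tev A (j i) x w' z, tev A (j i) x (s (Suc k)) z) \<in> ?B"
    proof
      show "(tev A (j i) x w' z, tev A (j i) x (s (Suc k)) z) \<in> \<beta>"
        by (rule tev_cong[OF cb ti b(2)[OF xU] bs2 b(2)[OF zU]])
      show "(tev A (j i) x w' z, tev A (j i) x (s (Suc k)) z) \<in> \<alpha>" by (rule al[OF wU(2) sU(2)])
    qed
    have e: "tev A (j i) x (s (Suc k)) z = t (Suc k)"
    proof (cases "odd k")
      case True
      then have "even i" "s (Suc k) = x" by (auto simp: i_def s_def)
      then show ?thesis using ide[OF xU zU i1] by (simp add: t_def i_def)
    next
      case False
      then have "odd i" "s (Suc k) = z" by (auto simp: i_def s_def)
      then show ?thesis using ido[OF xU zU i1] by (simp add: t_def i_def)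
    qed
    have IH: "(x, t k) \<in> ?R^^k O ?R" using Suc by simp
    then obtain m m' where m1: "(x,m) \<in> ?R^^k" and m2: "(m,m') \<in> ?C" and m3: "(m', t k) \<in> ?B"
      by blast
    have "(m', tev A (j i) x w z) \<in> ?B" using m3 r1 a(4)[of m' "t k" "tev A (j i) x w z"]
      b(4)[of m' "t k" "tev A (j i) x w z"] by blast
    with m2 have "(m, tev A (j i) x w z) \<in> ?R" by blast
    with m1 have s1: "(x, tev A (j i) x w z) \<in> ?R^^(Suc k)" by auto
    have "(tev A (j i) x w z, t (Suc k)) \<in> ?R" using r2 r3 e by auto
    with s1 show ?case by auto
  qed
  have "(x, t n) \<in> ?R^^(n+1)" using claim by simp
  moreover have "t n = z" unfolding t_def
    by (rule idl[OF xU _ zU]) (use xU zU in \<open>simp add: s_def\<close>)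
  ultimately show ?thesis by simp
qed

lemma my_converse_relpow: fixes R :: "'a rel" shows "(R^^n)\<inverse> = (R\<inverse>)^^n"
proof (induction n)
  case 0 then show ?case by simp
next
  case (Suc n)
  have "(R^^Suc n)\<inverse> = R\<inverse> O (R\<inverse>)^^n" using Suc by (simp add: converse_relcomp)
  also have "\<dots> = (R\<inverse>)^^n O R\<inverse>" by (rule relpow_commute)
  finally show ?case by simp
qed

lemma rcomp_alt_even: "rcomp_alt X Y (2*k+2) = (X O Y)^^(k+1)"
proof (induction k)
  case 0
  then show ?case by simp
next
  case (Suc k)
  have "rcomp_alt X Y (2*Suc k+2) = X O Y O rcomp_alt X Y (2*k+2)"
    by (simp add: numeral_eq_Suc)
  also have "\<dots> = (X O Y) O (X O Y)^^(k+1)" using Suc by (simp add: O_assoc)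
  also have "\<dots> = (X O Y)^^(k+1) O (X O Y)" by (rule relpow_commute)
  also have "\<dots> = (X O Y)^^(Suc k+1)" by simp
  finally show ?case .
qed

theorem proposition5p2:
  fixes ar :: "'f \<Rightarrow> nat" and \<Sigma> :: "('f uterm \<times> 'f uterm) set" and n :: nat
  assumes "has_gumm_terms ar (variety ar \<Sigma> :: ('f, 'a) alg set) n"
  shows "\<forall>A \<in> (variety ar \<Sigma> :: ('f, 'a) alg set). \<forall>\<alpha> \<beta> \<gamma>.
           congruence ar A \<alpha> \<and> congruence ar A \<beta> \<and> congruence ar A \<gamma> \<longrightarrow>
           \<alpha> \<inter> (\<beta> O (\<alpha> \<inter> \<gamma>) O \<beta>) \<subseteq> rcomp_alt (\<alpha> \<inter> \<beta>) (\<alpha> \<inter> \<gamma>) (2*n+2)"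
proof (intro ballI allI impI subsetI)
  fix A :: "('f,'a) alg" and \<alpha> \<beta> \<gamma> and pr
  assume AV: "A \<in> variety ar \<Sigma>" and cs: "congruence ar A \<alpha> \<and> congruence ar A \<beta> \<and> congruence ar A \<gamma>"
    and pr: "pr \<in> \<alpha> \<inter> (\<beta> O (\<alpha> \<inter> \<gamma>) O \<beta>)"
  from cs have ca: "congruence ar A \<alpha>" and cb: "congruence ar A \<beta>" and cg: "congruence ar A \<gamma>"
    by auto
  obtain p j where tp: "ternary_term ar p" and tj: "\<forall>i\<in>{1..n+1}. ternary_term ar (j i)"
    and ids: "\<forall>A\<in>(variety ar \<Sigma> :: ('f, 'a) alg set). \<forall>x\<in>univ A. \<forall>y\<in>univ A. \<forall>z\<in>univ A.
        (\<forall>i\<in>{1..n+1}. tev A (j i) x y x = x) \<and>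
        tev A p x z z = x \<and>
        tev A p x x z = tev A (j 1) x x z \<and>
        (\<forall>i. 1 \<le> i \<and> i \<le> n \<and> odd i \<longrightarrow> tev A (j i) x z z = tev A (j (i+1)) x z z) \<and>
        (\<forall>i. 1 \<le> i \<and> i \<le> n \<and> even i \<longrightarrow> tev A (j i) x x z = tev A (j (i+1)) x x z) \<and>
        tev A (j (n+1)) x y z = z"
    using assms unfolding has_gumm_terms_def by blast
  note idsA = ids[rule_format, OF AV]
  obtain a b where ab: "pr = (a,b)" by (cases pr)
  from pr ab obtain u v where au: "(a,u) \<in> \<beta>" and uv: "(u,v) \<in> \<alpha> \<inter> \<gamma>" and vb: "(v,b) \<in> \<beta>"
    and abA: "(a,b) \<in> \<alpha>" by blast
  note a = cong_props[OF ca] and bb = cong_props[OF cb] and g = cong_props[OF cg]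
  have "(b,a) \<in> ((\<alpha> \<inter> \<gamma>) O (\<alpha> \<inter> \<beta>))^^(n+1)"
    apply (rule chain[OF ca cb cg tp tj, of _ v u])
    using ids AV apply blast
    apply (rule bb(3)[OF vb])
    using uv a(3)[of u v] g(3)[of u v] apply blast
    apply (rule bb(3)[OF au])
    by (rule a(3)[OF abA])
  then have "(a,b) \<in> (((\<alpha> \<inter> \<gamma>) O (\<alpha> \<inter> \<beta>))^^(n+1))\<inverse>" by simp
  also have "(((\<alpha> \<inter> \<gamma>) O (\<alpha> \<inter> \<beta>))^^(n+1))\<inverse> = ((\<alpha> \<inter> \<beta>) O (\<alpha> \<inter> \<gamma>))^^(n+1)"
  proof -
    have sB: "(\<alpha> \<inter> \<beta>)\<inverse> = \<alpha> \<inter> \<beta>" using ca cb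
      unfolding congruence_def equiv_def by (auto simp: sym_conv_converse_eq)
    have sC: "(\<alpha> \<inter> \<gamma>)\<inverse> = \<alpha> \<inter> \<gamma>" using ca cg
      unfolding congruence_def equiv_def by (auto simp: sym_conv_converse_eq)
    show ?thesis unfolding my_converse_relpow converse_relcomp sB sC ..
  qed
  finally show "pr \<in> rcomp_alt (\<alpha> \<inter> \<beta>) (\<alpha> \<inter> \<gamma>) (2*n+2)"
    using ab rcomp_alt_even by metis
qed

end
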